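(* For any $b,c\in\mathbb C\setminus\{-1,-2,-3,\dots\}$, with $f$ and $h$ as defined in the context, \[f(b,c)=\frac{c+1}{b+1}\cdot\frac{h(b)}{h(c)}.\]
   Context: Let $u_n=(-1)^{s_2(n)}$, where $s_2(n)$ is the sum of the binary digits of the non-negative integer $n$ (Thue–Morse sequence with values $\pm1$). For $b,c\in\mathbb C\setminus\{-1,-2,-3,\dots\}$ define $f(b,c)=\prod_{n=1}^\infty\left(\frac{n+b}{n+c}\right)^{u_n}$ (limit of partial products; this converges for all such $b,c$). Define $h(x)=f\left(\frac x2,\frac{x+1}{2}\right)=\prod_{n=1}^\infty\left(\frac{2n+x}{2n+1+x}\right)^{u_n}$ for $x\in\mathbb C\setminus\{-2,-3,-4,\dots\}$. *)

theory Defs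
  imports "HOL-Analysis.Analysis"
begin

fun s2 :: "nat \<Rightarrow> nat" where
  "s2 n = (if n = 0 then 0 else n mod 2 + s2 (n div 2))"

definition u :: "nat \<Rightarrow> int" where
  "u n = (-1) ^ s2 n"

definition f :: "complex \<Rightarrow> complex \<Rightarrow> complex" where
  "f b c = lim (\<lambda>N. \<Prod>n=1..N. ((of_nat n + b) / (of_nat n + c)) powi u n)"

definition h :: "complex \<Rightarrow> complex" where
  "h x = f (x / 2) ((x + 1) / 2)"

end

theory Submission
  imports Defs
begin


declare s2.simps[simp del]
lemma s2_even: "s2 (2*n) = s2 n"
  by (cases "n = 0") (simp_all add: s2.simps[of "2*n"] s2.simps[of 0])
lemma s2_0: "s2 0 = 0" by (simp add: s2.simps[of 0])
lemma s2_odd: "s2 (Suc (2*n)) = Suc (s2 n)"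
  by (simp add: s2.simps[of "Suc (2*n)"])
lemma u_even: "u (2*n) = u n" by (simp add: u_def s2_even)
lemma u_odd: "u (2*n+1) = - u n" by (simp add: u_def s2_odd)
lemma u_0: "u 0 = 1" by (simp add: u_def s2_0)
lemma u_1: "u 1 = -1" using u_odd[of 0] by (simp add: u_0)
lemma u_pm: "u n = 1 \<or> u n = -1"
  by (cases "even (s2 n)") (auto simp: u_def)

lemma even_odd_LIMSEQ:
  fixes X :: "nat \<Rightarrow> 'a::metric_space"
  assumes e: "(\<lambda>n. X (2*n)) \<longlonglongrightarrow> L" and o: "(\<lambda>n. X (2*n+1)) \<longlonglongrightarrow> L"
  shows "X \<longlonglongrightarrow> L"
proof (rule metric_LIMSEQ_I)
  fix r :: real assume r: "0 < r"
  obtain N1 where N1: "\<And>n. n \<ge> N1 \<Longrightarrow> dist (X (2*n)) L < r"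
    using metric_LIMSEQ_D[OF e r] by blast
  obtain N2 where N2: "\<And>n. n \<ge> N2 \<Longrightarrow> dist (X (2*n+1)) L < r"
    using metric_LIMSEQ_D[OF o r] by blast
  show "\<exists>N. \<forall>n\<ge>N. dist (X n) L < r"
  proof (intro exI allI impI)
    fix n assume n: "n \<ge> 2 * (N1 + N2)"
    show "dist (X n) L < r"
    proof (cases "even n")
      case True then obtain k where k: "n = 2*k" by auto
      with n N1[of k] show ?thesis by auto
    next
      case False then obtain k where k: "n = 2*k+1" using oddE by blast
      with n N2[of k] show ?thesis by auto
    qed
  qed
qed

lemma powi_pm_tendsto:
  fixes g :: "nat \<Rightarrow> complex"
  assumes g: "g \<longlonglongrightarrow> 1" and e: "\<And>n. e n = 1 \<or> e n = -1"
  shows "(\<lambda>n. g n powi e n) \<longlonglongrightarrow> 1"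
proof -
  have gi: "(\<lambda>n. inverse (g n)) \<longlonglongrightarrow> 1"
    using tendsto_inverse[OF g] by simp
  have z: "(\<lambda>n. norm (g n - 1) + norm (inverse (g n) - 1)) \<longlonglongrightarrow> 0"
    using tendsto_add[OF tendsto_norm_zero[OF LIM_zero[OF g]] tendsto_norm_zero[OF LIM_zero[OF gi]]]
    by simp
  have ev: "\<forall>\<^sub>F n in sequentially. norm (g n powi e n - 1) \<le> norm (g n - 1) + norm (inverse (g n) - 1)"
  proof (intro always_eventually allI)
    fix n show "norm (g n powi e n - 1) \<le> norm (g n - 1) + norm (inverse (g n) - 1)"
      using e[of n] by (auto simp: power_int_minus1_right)
  qed
  have "(\<lambda>n. g n powi e n - 1) \<longlonglongrightarrow> 0"
    by (rule Lim_null_comparison[OF ev z])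
  thus ?thesis by (rule LIM_zero_cancel)
qed

lemma ratio_tendsto:
  fixes a b :: complex
  shows "(\<lambda>n. (of_nat n + a) / (of_nat n + b)) \<longlonglongrightarrow> 1"
proof -
  have "(\<lambda>n. (1 + a / of_nat n) / (1 + b / of_nat n)) \<longlonglongrightarrow> (1 + 0) / (1 + 0)"
    by (intro tendsto_intros lim_const_over_n) auto
  hence *: "(\<lambda>n. (1 + a / of_nat n) / (1 + b / of_nat n)) \<longlonglongrightarrow> 1" by simp
  have "\<forall>\<^sub>F n in sequentially. (1 + a / of_nat n) / (1 + b / of_nat n) = (of_nat n + a) / (of_nat n + b)"
  proof (rule eventually_sequentiallyI[of 1])
    fix n :: nat assume "n \<ge> 1"
    hence nz: "(of_nat n :: complex) \<noteq> 0" by auto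
    have "1 + a / of_nat n = (of_nat n + a) / of_nat n" "1 + b / of_nat n = (of_nat n + b) / of_nat n"
      using nz by (simp_all add: field_simps)
    thus "(1 + a / of_nat n) / (1 + b / of_nat n) = (of_nat n + a) / (of_nat n + b)"
      using nz by simp
  qed
  thus ?thesis by (rule Lim_transform_eventually[OF *])
qed

lemma P_Suc:
  fixes g :: "nat \<Rightarrow> complex"
  shows "(\<Prod>n=1..Suc N. g n powi u n) = (\<Prod>n=1..N. g n powi u n) * g (Suc N) powi u (Suc N)"
  by (simp add: prod.cl_ivl_Suc)

lemma odd_full:
  fixes g :: "nat \<Rightarrow> complex"
  assumes nz: "\<And>n. n \<ge> 1 \<Longrightarrow> g n \<noteq> 0" and g1: "g \<longlonglongrightarrow> 1"
    and odd: "(\<lambda>M. \<Prod>n=1..2*M+1. g n powi u n) \<longlonglongrightarrow> L"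
  shows "(\<lambda>N. \<Prod>n=1..N. g n powi u n) \<longlonglongrightarrow> L"
proof -
  define P where "P N = (\<Prod>n=1..N. g n powi u n)" for N
  have PS: "P (Suc N) = P N * g (Suc N) powi u (Suc N)" for N
    unfolding P_def by (rule P_Suc)
  have sm2: "strict_mono (\<lambda>m::nat. 2*m+1)"
    by (auto simp: strict_mono_def)
  have ga: "(\<lambda>m. g (2*m+1)) \<longlonglongrightarrow> 1"
    using LIMSEQ_subseq_LIMSEQ[OF g1 sm2] by (simp_all add: o_def)
  have t1: "(\<lambda>M. g (2*M+1) powi u (2*M+1)) \<longlonglongrightarrow> 1"
    using powi_pm_tendsto[OF ga, of "\<lambda>M. u (2*M+1)"] u_pm by blast
  have odd': "(\<lambda>M. P (2*M+1)) \<longlonglongrightarrow> L" using odd by (simp add: P_def)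
  have "(\<lambda>M. P (2*M+1) / g (2*M+1) powi u (2*M+1)) \<longlonglongrightarrow> L / 1"
    by (rule tendsto_divide[OF odd' t1]) simp
  moreover have "P (2*M+1) / g (2*M+1) powi u (2*M+1) = P (2*M)" for M
  proof -
    have "g (2*M+1) powi u (2*M+1) \<noteq> 0" using nz[of "2*M+1"] by simp
    thus ?thesis using PS[of "2*M"] by simp
  qed
  ultimately have even: "(\<lambda>M. P (2*M)) \<longlonglongrightarrow> L" by simp
  have "P \<longlonglongrightarrow> L" by (rule even_odd_LIMSEQ[OF even odd'])
  thus ?thesis unfolding P_def by blast
qed

lemma G:
  fixes g :: "nat \<Rightarrow> complex"
  assumes nz: "\<And>n. n \<ge> 1 \<Longrightarrow> g n \<noteq> 0" and g1: "g \<longlonglongrightarrow> 1"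
    and sm: "summable (\<lambda>m. norm (g (2*m+2) / g (2*m+3) - 1))"
  shows "\<exists>L. L \<noteq> 0 \<and> (\<lambda>N. \<Prod>n=1..N. g n powi u n) \<longlonglongrightarrow> L"
proof -
  define P where "P N = (\<Prod>n=1..N. g n powi u n)" for N
  define r where "r m = g (2*m+2) / g (2*m+3)" for m
  define w where "w m = r m powi u (m+1)" for m
  have PS: "P (Suc N) = P N * g (Suc N) powi u (Suc N)" for N
    unfolding P_def by (rule P_Suc)
  have Podd: "P (2*M+1) = inverse (g 1) * (\<Prod>m<M. w m)" for M
  proof (induction M)
    case 0 have "u (Suc 0) = -1" using u_1 by simp
    thus ?case by (simp add: P_def power_int_minus1_right)
  next
    case (Suc M)
    have e1: "u (2*M+2) = u (M+1)" using u_even[of "M+1"] by (simp add: algebra_simps)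
    have e2: "u (2*M+3) = - u (M+1)" using u_odd[of "M+1"] by (simp add: algebra_simps numeral_eq_Suc)
    have "P (2*Suc M+1) = P (2*M+1) * (g (2*M+2) powi u (2*M+2) * g (2*M+3) powi u (2*M+3))"
      using PS[of "2*M+2"] PS[of "2*M+1"] by (simp add: numeral_eq_Suc mult.assoc)
    also have "g (2*M+2) powi u (2*M+2) * g (2*M+3) powi u (2*M+3) = w M"
      unfolding e1 e2 w_def r_def using u_pm[of "M+1"]
      by (auto simp: power_int_minus1_right field_simps)
    finally show ?case using Suc by (simp add: mult.assoc)
  qed
  have sm2: "strict_mono (\<lambda>m::nat. 2*m+2)" "strict_mono (\<lambda>m::nat. 2*m+3)"
    by (auto simp: strict_mono_def)
  have ga: "(\<lambda>m. g (2*m+2)) \<longlonglongrightarrow> 1" "(\<lambda>m. g (2*m+3)) \<longlonglongrightarrow> 1"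
    using LIMSEQ_subseq_LIMSEQ[OF g1 sm2(1)] LIMSEQ_subseq_LIMSEQ[OF g1 sm2(2)]
    by (simp_all add: o_def)
  have r1: "r \<longlonglongrightarrow> 1"
    unfolding r_def using tendsto_divide[OF ga(1) ga(2)] by simp
  have "\<forall>\<^sub>F m in sequentially. dist (r m) 1 < 1/2"
    using tendstoD[OF r1, of "1/2"] by simp
  hence evb: "\<forall>\<^sub>F m in sequentially. norm (w m - 1) \<le> 2 * norm (r m - 1)"
  proof (rule eventually_mono)
    fix m assume d: "dist (r m) 1 < 1/2"
    have nr: "norm (r m) \<ge> 1/2"
      using d norm_triangle_ineq2[of 1 "r m"] by (simp add: dist_norm norm_minus_commute)
    hence rnz: "r m \<noteq> 0" by auto
    show "norm (w m - 1) \<le> 2 * norm (r m - 1)"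
    proof (cases "u (m+1) = 1")
      case True thus ?thesis by (simp add: w_def)
    next
      case False
      hence "u (m+1) = -1" using u_pm by blast
      hence "w m - 1 = (1 - r m) / r m" using rnz by (simp add: w_def power_int_minus1_right field_simps)
      hence "norm (w m - 1) = norm (r m - 1) / norm (r m)"
        by (simp add: norm_divide norm_minus_commute)
      also have "\<dots> \<le> norm (r m - 1) / (1/2)"
        using nr by (intro divide_left_mono) auto
      finally show ?thesis by simp
    qed
  qed
  have smw: "summable (\<lambda>m. norm (w m - 1))"
    by (rule summable_comparison_test_ev[of _ "\<lambda>m. 2 * norm (r m - 1)"])
       (use evb sm in \<open>auto simp: r_def intro: summable_mult\<close>)
  have cp: "convergent_prod w"
    by (rule abs_convergent_prod_imp_convergent_prod[OF summable_imp_abs_convergent_prod[OF smw]])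
  have wnz: "w i \<noteq> 0" for i
    using nz[of "2*i+2"] nz[of "2*i+3"] by (simp add: w_def r_def)
  have pw: "(\<lambda>M. \<Prod>m<M. w m) \<longlonglongrightarrow> prodinf w"
    using has_prod_imp_tendsto'[OF convergent_prod_has_prod[OF cp]] by simp
  have pnz: "prodinf w \<noteq> 0" by (rule prodinf_nonzero[OF cp wnz])
  define L where "L = inverse (g 1) * prodinf w"
  have Lnz: "L \<noteq> 0" using pnz nz[of 1] by (simp add: L_def)
  have odd: "(\<lambda>M. P (2*M+1)) \<longlonglongrightarrow> L"
    unfolding Podd L_def by (intro tendsto_intros pw)
  have "(\<lambda>N. \<Prod>n=1..N. g n powi u n) \<longlonglongrightarrow> L"
    by (rule odd_full[OF nz g1]) (use odd in \<open>unfold P_def\<close>)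
  thus ?thesis using Lnz by blast
qed



lemma norm_lb: "norm (of_nat k + x :: complex) \<ge> real k - norm x"
  using norm_triangle_ineq4[of "of_nat k + x" "x"] by simp

lemma alg4:
  fixes y :: complex
  assumes "y \<noteq> 0" "y+1 \<noteq> 0" "y+2 \<noteq> 0" "y+3 \<noteq> 0"
  shows "(y/(y+1)) / ((y+2)/(y+3)) - 1 = -2/((y+1)*(y+2))"
proof -
  have "(y/(y+1)) / ((y+2)/(y+3)) = (y*(y+3)) / ((y+1)*(y+2))"
    using assms by (simp add: field_simps)
  also have "\<dots> = ((y+1)*(y+2) - 2) / ((y+1)*(y+2))"
    by (simp add: algebra_simps)
  also have "\<dots> = 1 - 2 / ((y+1)*(y+2))"
    using assms by (simp add: diff_divide_distrib)
  finally show ?thesis by simp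
qed

lemma H:
  fixes x :: complex
  assumes x: "\<forall>k::nat. k \<ge> 1 \<longrightarrow> x \<noteq> - of_nat k"
  shows "(\<lambda>N. \<Prod>n=1..N. ((of_nat n + x/2)/(of_nat n + (x+1)/2)) powi u n) \<longlonglongrightarrow> h x \<and> h x \<noteq> 0"
proof -
  define g where "g n = (of_nat n + x/2)/(of_nat n + (x+1)/2)" for n :: nat
  have xk: "of_nat k + x \<noteq> 0" if "k \<ge> 1" for k :: nat
    using x that by (metis add.commute add_eq_0_iff)
  have g2: "g n = (of_nat (2*n) + x) / (of_nat (2*n+1) + x)" for n
  proof -
    have "g n = ((of_nat n + x/2)*2)/((of_nat n + (x+1)/2)*2)"
      unfolding g_def by (rule mult_divide_mult_cancel_right[symmetric]) simp
    also have "\<dots> = (of_nat (2*n) + x) / (of_nat (2*n+1) + x)"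
      by (simp add: algebra_simps)
    finally show ?thesis .
  qed
  have nz: "g n \<noteq> 0" if "n \<ge> 1" for n
    unfolding g2 using xk[of "2*n"] xk[of "2*n+1"] that by simp
  have g1: "g \<longlonglongrightarrow> 1" unfolding g_def by (rule ratio_tendsto)
  have eq: "g (2*m+2) / g (2*m+3) - 1 = -2 / ((of_nat (4*m+5) + x) * (of_nat (4*m+6) + x))" for m
  proof -
    define y where "y = of_nat (4*m+4) + x"
    have "g (2*m+2) / g (2*m+3) = (y/(y+1)) / ((y+2)/(y+3))"
      unfolding g2 y_def by (simp add: algebra_simps)
    also have "\<dots> - 1 = -2/((y+1)*(y+2))"
      by (rule alg4) (use xk[of "4*m+4"] xk[of "4*m+5"] xk[of "4*m+6"] xk[of "4*m+7"] in
          \<open>simp_all add: y_def algebra_simps\<close>)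
    finally show ?thesis by (simp add: y_def algebra_simps)
  qed
  have sm: "summable (\<lambda>m. norm (g (2*m+2) / g (2*m+3) - 1))"
  proof (rule summable_comparison_test_ev[of _ "\<lambda>m. 2 * inverse (of_nat m ^ 2)"])
    show "summable (\<lambda>m::nat. 2 * inverse (real m ^ 2))"
      by (intro summable_mult inverse_power_summable) auto
    show "\<forall>\<^sub>F m in sequentially. norm (norm (g (2*m+2) / g (2*m+3) - 1)) \<le> 2 * inverse (real m ^ 2)"
    proof (rule eventually_sequentiallyI[of "nat \<lceil>norm x\<rceil> + 1"])
      fix m assume m: "nat \<lceil>norm x\<rceil> + 1 \<le> m"
      hence mx: "real m \<ge> norm x" "real m \<ge> 1" by linarith+
      have a: "norm (of_nat (4*m+5) + x) \<ge> real m"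
        using norm_lb[of "4*m+5" x] mx by simp
      have b: "norm (of_nat (4*m+6) + x) \<ge> real m"
        using norm_lb[of "4*m+6" x] mx by simp
      have q: "real m ^ 2 \<le> norm (of_nat (4*m+5) + x) * norm (of_nat (4*m+6) + x)"
        unfolding power2_eq_square using a b mx by (intro mult_mono) auto
      have m2: "0 < real m ^ 2" using mx by simp
      hence pos: "0 < norm (of_nat (4*m+5) + x) * norm (of_nat (4*m+6) + x)" using q by linarith
      have "2 / (norm (of_nat (4*m+5) + x) * norm (of_nat (4*m+6) + x)) \<le> 2 / real m ^ 2"
        by (rule divide_left_mono[OF q]) (simp, rule mult_pos_pos[OF pos m2])
      thus "norm (norm (g (2*m+2) / g (2*m+3) - 1)) \<le> 2 * inverse (real m ^ 2)"
        unfolding eq by (simp add: norm_divide norm_mult divide_inverse norm_inverse)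
    qed
  qed
  obtain L where L: "L \<noteq> 0" "(\<lambda>N. \<Prod>n=1..N. g n powi u n) \<longlonglongrightarrow> L"
    using G[OF nz g1 sm] by blast
  have "h x = L" unfolding h_def f_def using limI[OF L(2)] by (simp add: g_def)
  thus ?thesis using L by (simp add: g_def)
qed



lemma alg_gen:
  fixes p q p1 q1 :: complex and v :: int
  assumes "p \<noteq> 0" "q \<noteq> 0" "p1 \<noteq> 0" "q1 \<noteq> 0" "v = 1 \<or> v = -1"
  shows "(p/q) powi v * (p1/q1) powi (-v) * (q/q1) powi v = (p/p1) powi v"
  using assms(5)
proof
  assume "v = 1" thus ?thesis using assms(1-4) by (simp add: power_int_minus1_right field_simps)
next
  assume "v = -1" thus ?thesis using assms(1-4) by (simp add: power_int_minus1_right field_simps)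
qed

lemma half_ratio:
  fixes n :: nat and x :: complex
  shows "(of_nat n + x/2)/(of_nat n + (x+1)/2) = (of_nat (2*n) + x)/(of_nat (2*n) + 1 + x)"
proof -
  have "(of_nat n + x/2)/(of_nat n + (x+1)/2) = (2*(of_nat n + x/2))/(2*(of_nat n + (x+1)/2))"
    by (rule mult_divide_mult_cancel_left[symmetric]) simp
  moreover have "2*(of_nat n + x/2) = of_nat (2*n) + x" "2*(of_nat n + (x+1)/2) = of_nat (2*n) + 1 + x"
    by (simp_all add: ring_distribs)
  ultimately show ?thesis by simp
qed

theorem lemma3:
  fixes b c :: complex
  assumes "\<forall>k::nat. k \<ge> 1 \<longrightarrow> b \<noteq> - of_nat k"
      and "\<forall>k::nat. k \<ge> 1 \<longrightarrow> c \<noteq> - of_nat k"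
  shows "f b c = (c + 1) / (b + 1) * (h b / h c)"
proof -
  define Hp :: "complex \<Rightarrow> nat \<Rightarrow> complex" where "Hp x N = (\<Prod>n=1..N. ((of_nat n + x/2)/(of_nat n + (x+1)/2)) powi u n)" for x N
  define gf where "gf n = (of_nat n + b)/(of_nat n + c)" for n :: nat
  define Pf where "Pf N = (\<Prod>n=1..N. gf n powi u n)" for N
  have hb: "Hp b \<longlonglongrightarrow> h b" "h b \<noteq> 0" using H[OF assms(1)] unfolding Hp_def by auto
  have hc: "Hp c \<longlonglongrightarrow> h c" "h c \<noteq> 0" using H[OF assms(2)] unfolding Hp_def by auto
  have bk: "of_nat k + b \<noteq> 0" if "k \<ge> 1" for k :: nat
    using assms(1) that by (metis add.commute add_eq_0_iff)
  have ck: "of_nat k + c \<noteq> 0" if "k \<ge> 1" for k :: nat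
    using assms(2) that by (metis add.commute add_eq_0_iff)
  have PS: "Pf (Suc N) = Pf N * gf (Suc N) powi u (Suc N)" for N
    unfolding Pf_def by (rule P_Suc)
  have HS: "Hp x (Suc N) = Hp x N * ((of_nat (Suc N) + x/2)/(of_nat (Suc N) + (x+1)/2)) powi u (Suc N)" for x N
    unfolding Hp_def by (rule P_Suc)
  have key: "Pf (2*K+1) * ((b+1) * Hp c K) = (c+1) * Hp b K" for K
  proof (induction K)
    case 0
    have "u (Suc 0) = -1" using u_1 by simp
    thus ?case using bk[of 1] ck[of 1]
      by (simp add: Pf_def Hp_def gf_def power_int_minus1_right field_simps)
  next
    case (Suc K)
    define X :: complex where "X = of_nat (2*K+2)"
    have e1: "u (2*K+2) = u (K+1)" using u_even[of "K+1"] by (simp add: algebra_simps)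
    have e2: "u (2*K+3) = - u (K+1)" using u_odd[of "K+1"] by (simp add: algebra_simps numeral_eq_Suc)
    have P3: "Pf (2*Suc K+1) = Pf (2*K+1) * ((gf (2*K+2)) powi u (K+1) * (gf (2*K+3)) powi (- u (K+1)))"
      using PS[of "2*K+2"] PS[of "2*K+1"] e1 e2 by (simp add: numeral_eq_Suc mult.assoc)
    have g2: "gf (2*K+2) = (X+b)/(X+c)" "gf (2*K+3) = (X+1+b)/(X+1+c)"
      unfolding gf_def X_def by (simp_all add: algebra_simps)
    have hr: "(of_nat (Suc K) + x/2)/(of_nat (Suc K) + (x+1)/2) = (X+x)/(X+1+x)" for x
      unfolding half_ratio X_def by (simp add: algebra_simps)
    have nzs: "X+b \<noteq> 0" "X+c \<noteq> 0" "X+1+b \<noteq> 0" "X+1+c \<noteq> 0"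
      using bk[of "2*K+2"] ck[of "2*K+2"] bk[of "2*K+3"] ck[of "2*K+3"]
      by (simp_all add: X_def algebra_simps)
    have A: "((X+b)/(X+c)) powi u (K+1) * ((X+1+b)/(X+1+c)) powi (- u (K+1))
          * ((X+c)/(X+1+c)) powi u (K+1) = ((X+b)/(X+1+b)) powi u (K+1)"
      by (rule alg_gen[OF nzs u_pm])
    have "Pf (2*Suc K+1) * ((b+1) * Hp c (Suc K))
        = (Pf (2*K+1) * ((b+1) * Hp c K)) * (((X+b)/(X+c)) powi u (K+1) * ((X+1+b)/(X+1+c)) powi (- u (K+1))
          * ((X+c)/(X+1+c)) powi u (K+1))"
      unfolding P3 HS hr g2 by (simp add: ac_simps)
    also have "\<dots> = (c+1) * Hp b (Suc K)"
      unfolding A Suc.IH HS hr by (simp add: ac_simps)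
    finally show ?case .
  qed
  have Hnz: "Hp c K \<noteq> 0" for K
  proof -
    have "(of_nat n + c/2)/(of_nat n + (c+1)/2) \<noteq> 0" if "n \<ge> 1" for n :: nat
      unfolding half_ratio using ck[of "2*n"] ck[of "2*n+1"] that by (simp add: algebra_simps)
    thus ?thesis unfolding Hp_def by (auto simp: prod_zero_iff)
  qed
  have b1: "b + 1 \<noteq> 0" using bk[of 1] by (simp add: add.commute)
  define R where "R = (c+1) * h b / ((b+1) * h c)"
  have "(\<lambda>K. (c+1) * Hp b K / ((b+1) * Hp c K)) \<longlonglongrightarrow> R"
    unfolding R_def using hb hc b1 by (intro tendsto_intros) auto
  moreover have "(c+1) * Hp b K / ((b+1) * Hp c K) = Pf (2*K+1)" for K
  proof -
    have d: "(b+1) * Hp c K \<noteq> 0" using Hnz[of K] b1 by simp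
    show ?thesis using key[of K] d by (simp only: divide_eq_eq) simp
  qed
  ultimately have odd: "(\<lambda>K. \<Prod>n=1..2*K+1. gf n powi u n) \<longlonglongrightarrow> R"
    by (simp add: Pf_def)
  have gnz: "gf n \<noteq> 0" if "n \<ge> 1" for n
    using bk[OF that] ck[OF that] by (simp add: gf_def)
  have "(\<lambda>N. \<Prod>n=1..N. gf n powi u n) \<longlonglongrightarrow> R"
  proof (rule odd_full[OF _ _ odd])
    show "gf \<longlonglongrightarrow> 1" unfolding gf_def by (rule ratio_tendsto)
  qed (rule gnz)
  hence "f b c = R" unfolding f_def gf_def by (rule limI)
  thus ?thesis unfolding R_def using hc b1 by (simp add: field_simps)
qed

end
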